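(* The function $\mathrm{gain}$, defined on collections of actively connected subsets of $V$, i.e. $\mathrm{gain}: 2^{\{S\subseteq V:\ S\text{ actively connected}\}}\to\mathbb{R}_{\ge0}$, is submodular.
   Context: Steiner Forest: finite undirected graph $G=(V,E)$, non-negative edge costs $(c_e)_{e\in E}$, set $\mathcal{D}$ of demand pairs $\{a,b\}\subseteq V$ (partners). For $U\subseteq V$, $\delta(U)$ is the set of edges with exactly one endpoint in $U$. The $\varepsilon$-extended moat-growing algorithm (fixed $\varepsilon\ge0$): time $t$ increases continuously from $0$ at unit rate; it maintains tight edges $F$ (initially empty), duals $y_S(t)\ge0$ (initially $0$), and budgets of components (initially $0$). $\mathcal{C}^t$ is the family of vertex sets of connected components of $(V,F)$. A component is demand-active if it contains a vertex not connected in $(V,F)$ to some partner; budget-active if not demand-active but with positive budget; active if either; $\mathcal{A}^t$ is the set of active components. Each $y_S$, $S\in\mathcal{A}^t$, grows at unit rate; budgets of demand-active components grow at rate $\varepsilon$ and of budget-active ones decrease at rate $1$; an edge $e$ with $\sum_{S:e\in\delta(S)}y_S(t)=c_e$ becomes tight and is added to $F$; merging components add budgets. The deactivation time $\tau_v$ of $v$ is the largest $t$ such that for all $s<t$, $v$ lies in a set of $\mathcal{A}^s$. Vertices $u,v$ are actively connected if for some $t$ they lie in a common set of $\mathcal{C}^t$ and $\tau_u,\tau_v\ge t$; this is an equivalence relation and a set is actively connected if contained in one equivalence class. For a collection $\mathcal{S}$ of actively connected sets, $\mathcal{A}^t/\mathcal{S}$ arises from $\mathcal{A}^t$ by merging sets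 of $\mathcal{A}^t$ into a single set whenever they are intersected by the same $S\in\mathcal{S}$ (transitively), and $\mathrm{gain}(\mathcal{S})=2\int_0^\infty(|\mathcal{A}^t|-|\mathcal{A}^t/\mathcal{S}|)\,dt$. *)

theory Defs
  imports "HOL-Analysis.Analysis"
begin

section \<open>Graphs: edges are 2-element vertex sets\<close>

definition cut_edges :: "'v set set \<Rightarrow> 'v set \<Rightarrow> 'v set set" where
  "cut_edges E U = {e \<in> E. card (e \<inter> U) = 1}"

definition edge_rel :: "'v set set \<Rightarrow> ('v \<times> 'v) set" where
  "edge_rel F = {(u, v). {u, v} \<in> F}"

definition comp_of :: "'v set \<Rightarrow> 'v set set \<Rightarrow> 'v \<Rightarrow> 'v set" where
  "comp_of V F v = {u \<in> V. (v, u) \<in> (edge_rel F)\<^sup>*}"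

definition components :: "'v set \<Rightarrow> 'v set set \<Rightarrow> 'v set set" where
  "components V F = comp_of V F ` V"

definition demand_active :: "'v set \<Rightarrow> 'v set set \<Rightarrow> 'v set set \<Rightarrow> 'v set \<Rightarrow> bool" where
  "demand_active V D F S \<longleftrightarrow>
     (\<exists>v\<in>S. \<exists>d\<in>D. v \<in> d \<and> (\<exists>u\<in>d. u \<noteq> v \<and> u \<notin> comp_of V F v))"

text \<open>F t: tight edges at time t; b t S: budget of component S at time t.\<close>

definition active_sets ::
  "'v set \<Rightarrow> 'v set set \<Rightarrow> (real \<Rightarrow> 'v set set) \<Rightarrow> (real \<Rightarrow> 'v set \<Rightarrow> real) \<Rightarrow> real \<Rightarrow> 'v set set" where
  "active_sets V D F b t =
     {S \<in> components V (F t). demand_active V D (F t) S \<or> (\<not> demand_active V D (F t) S \<and> b t S > 0)}"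

definition dual_y ::
  "'v set \<Rightarrow> 'v set set \<Rightarrow> (real \<Rightarrow> 'v set set) \<Rightarrow> (real \<Rightarrow> 'v set \<Rightarrow> real) \<Rightarrow> 'v set \<Rightarrow> real \<Rightarrow> real" where
  "dual_y V D F b S t = (LBINT s:{0..t}. (if S \<in> active_sets V D F b s then 1 else 0))"

text \<open>Budget dynamics: each demand-active component contributes rate epsilon, each budget-active
  component contributes rate -1, and merging adds budgets; hence the budget of a component S at
  time t is the integral over s \<le> t of these rates of the components at time s contained in S.\<close>
definition moat_run ::
  "'v set \<Rightarrow> 'v set set \<Rightarrow> ('v set \<Rightarrow> real) \<Rightarrow> 'v set set \<Rightarrow> real \<Rightarrow>
   (real \<Rightarrow> 'v set set) \<Rightarrow> (real \<Rightarrow> 'v set \<Rightarrow> real) \<Rightarrow> bool" where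
  "moat_run V E c D \<epsilon> F b \<longleftrightarrow>
     (\<forall>t s. 0 \<le> s \<longrightarrow> s \<le> t \<longrightarrow> F s \<subseteq> F t) \<and>
     (\<forall>t\<ge>0. F t = {e \<in> E. c e \<le> (\<Sum>S\<in>Pow V. if e \<in> cut_edges E S then dual_y V D F b S t else 0)}) \<and>
     (\<forall>t\<ge>0. \<forall>S\<in>components V (F t).
        b t S = (LBINT s:{0..t}.
            \<epsilon> * real (card {S' \<in> components V (F s). S' \<subseteq> S \<and> demand_active V D (F s) S'})
          - real (card {S' \<in> components V (F s). S' \<subseteq> S \<and> \<not> demand_active V D (F s) S' \<and> b s S' > 0})))"

definition deact_time ::
  "'v set \<Rightarrow> 'v set set \<Rightarrow> (real \<Rightarrow> 'v set set) \<Rightarrow> (real \<Rightarrow> 'v set \<Rightarrow> real) \<Rightarrow> 'v \<Rightarrow> ereal" where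
  "deact_time V D F b v =
     Sup {ereal t | t. 0 \<le> t \<and> (\<forall>s. 0 \<le> s \<and> s < t \<longrightarrow> (\<exists>S\<in>active_sets V D F b s. v \<in> S))}"

definition actively_connected ::
  "'v set \<Rightarrow> 'v set set \<Rightarrow> (real \<Rightarrow> 'v set set) \<Rightarrow> (real \<Rightarrow> 'v set \<Rightarrow> real) \<Rightarrow> 'v \<Rightarrow> 'v \<Rightarrow> bool" where
  "actively_connected V D F b u v \<longleftrightarrow>
     (\<exists>t\<ge>0. (\<exists>C\<in>components V (F t). u \<in> C \<and> v \<in> C) \<and>
            deact_time V D F b u \<ge> ereal t \<and> deact_time V D F b v \<ge> ereal t)"

definition actively_connected_set ::
  "'v set \<Rightarrow> 'v set set \<Rightarrow> (real \<Rightarrow> 'v set set) \<Rightarrow> (real \<Rightarrow> 'v set \<Rightarrow> real) \<Rightarrow> 'v set \<Rightarrow> bool" where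
  "actively_connected_set V D F b S \<longleftrightarrow>
     S \<subseteq> V \<and> (\<forall>u\<in>S. \<forall>v\<in>S. actively_connected V D F b u v)"

definition merge_rel :: "'v set set \<Rightarrow> 'v set set \<Rightarrow> ('v set \<times> 'v set) set" where
  "merge_rel A SS = {(X, Y). X \<in> A \<and> Y \<in> A \<and> (\<exists>S\<in>SS. S \<inter> X \<noteq> {} \<and> S \<inter> Y \<noteq> {})}"

definition merge_by :: "'v set set \<Rightarrow> 'v set set \<Rightarrow> 'v set set" where
  "merge_by A SS = (\<lambda>K. \<Union>K) ` (A // ((merge_rel A SS)\<^sup>*))"

definition gain ::
  "'v set \<Rightarrow> 'v set set \<Rightarrow> (real \<Rightarrow> 'v set set) \<Rightarrow> (real \<Rightarrow> 'v set \<Rightarrow> real) \<Rightarrow> 'v set set \<Rightarrow> real" where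
  "gain V D F b SS = 2 * (LBINT t:{0..}.
      real (card (active_sets V D F b t)) - real (card (merge_by (active_sets V D F b t) SS)))"

end

theory Submission
  imports Defs
begin


lemma cont_upto:
  fixes g :: "real \<Rightarrow> real"
  assumes "set_integrable lborel {0..t1} g"
  shows "continuous_on {..t1} (\<lambda>t. LBINT s:{0..t}. g s)"
proof (cases "t1 < 0")
  case True
  have "continuous_on {..t1} (\<lambda>t. 0::real)" by simp
  then show ?thesis
    by (rule continuous_on_cong[THEN iffD1, rotated 2]) (use True in \<open>auto simp: set_lebesgue_integral_def\<close>)
next
  case False
  have c1: "continuous_on {..0} (\<lambda>t. LBINT s:{0..t}. g s)"
  proof -
    have "continuous_on {..0} (\<lambda>t. 0::real)" by simp
    moreover have "\<And>t. t \<in> {..0::real} \<Longrightarrow> (LBINT s:{0..t}. g s) = 0"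
    proof -
      fix t :: real assume "t \<in> {..0}"
      then have "{0..t} = {} \<or> {0..t} = {0}" by auto
      show "(LBINT s:{0..t}. g s) = 0" unfolding set_lebesgue_integral_def
        apply (rule integral_eq_zero_AE)
        using AE_lborel_singleton[of 0] \<open>t \<in> {..0}\<close> by (auto elim!: AE_mp simp: indicator_def)
    qed
    ultimately show ?thesis using continuous_on_cong by (metis (no_types, lifting))
  qed
  have int1: "g integrable_on {0..t1}" using set_borel_integral_eq_integral(1)[OF assms] .
  have "continuous_on {0..t1} (\<lambda>t. integral {0..t} g)"
    by (rule indefinite_integral_continuous_1[OF int1])
  moreover have "\<And>t. t \<in> {0..t1} \<Longrightarrow> (LBINT s:{0..t}. g s) = integral {0..t} g"
  proof -
    fix t assume t: "t \<in> {0..t1}"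
    have "set_integrable lborel {0..t} g"
      by (rule set_integrable_subset[OF assms]) (use t in auto)
    then show "(LBINT s:{0..t}. g s) = integral {0..t} g"
      by (rule set_borel_integral_eq_integral(2))
  qed
  ultimately have c2: "continuous_on {0..t1} (\<lambda>t. LBINT s:{0..t}. g s)"
    using continuous_on_cong by (metis (no_types, lifting))
  have "continuous_on ({..0} \<union> {0..t1}) (\<lambda>t. LBINT s:{0..t}. g s)"
    by (rule continuous_on_closed_Un[OF _ _ c1 c2]) auto
  moreover have "{..0} \<union> {0..t1} = {..t1}" using False by auto
  ultimately show ?thesis by simp
qed

lemma meas_upto:
  fixes g :: "real \<Rightarrow> real"
  shows "(\<lambda>t. LBINT s:{0..t}. g s) \<in> borel_measurable borel"
proof -
  define T where "T = {t. set_integrable lborel {0..t} g}"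
  define G where "G = (\<lambda>t. LBINT s:{0..t}. g s)"
  have down: "t' \<in> T" if "t \<in> T" "t' \<le> t" for t t'
  proof -
    have "set_integrable lborel {0..t'} g"
      by (rule set_integrable_subset[of _ "{0..t}"]) (use that in \<open>auto simp: T_def\<close>)
    then show ?thesis by (simp add: T_def)
  qed
  have iv: "is_interval T"
    unfolding is_interval_1 using down by blast
  then have Tm: "T \<in> sets borel" by (rule real_interval_borel_measurable)
  have out: "G t = 0" if "t \<notin> T" for t
    using that by (simp add: G_def T_def set_lebesgue_integral_def not_integrable_integral_eq set_integrable_def)
  have cT: "continuous_on T G"
    unfolding continuous_on_eq_continuous_within
  proof
    fix t0 assume t0: "t0 \<in> T"
    show "continuous (at t0 within T) G"
    proof (cases "\<exists>t1\<in>T. t1 > t0")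
      case True
      then obtain t1 where t1: "t1 \<in> T" "t1 > t0" by blast
      have "continuous_on {..t1} G" unfolding G_def
        by (rule cont_upto) (use t1 in \<open>simp add: T_def\<close>)
      then have "isCont G t0"
        by (rule continuous_on_interior) (use t1 in auto)
      then show ?thesis by (rule continuous_at_imp_continuous_within)
    next
      case False
      then have "T \<subseteq> {..t0}" by (auto simp: not_less)
      moreover have "continuous_on {..t0} G" unfolding G_def
        by (rule cont_upto) (use t0 in \<open>simp add: T_def\<close>)
      ultimately have "continuous_on T G" by (rule continuous_on_subset[rotated])
      then show ?thesis using t0 continuous_on_eq_continuous_within by blast
    qed
  qed
  have "(\<lambda>x. indicator T x *\<^sub>R G x) \<in> borel_measurable borel"
    by (rule borel_measurable_continuous_on_indicator[OF Tm cT])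
  moreover have "(\<lambda>x. indicator T x *\<^sub>R G x) = G"
    using out by (auto simp: indicator_def fun_eq_iff)
  ultimately show ?thesis by (simp add: G_def)
qed


definition hr :: "('s \<Rightarrow> 'b set) \<Rightarrow> 's set \<Rightarrow> ('b \<times> 'b) set" where
  "hr P SS = {(x,y). \<exists>S\<in>SS. x \<in> P S \<and> y \<in> P S}"

definition qc :: "'b set \<Rightarrow> ('s \<Rightarrow> 'b set) \<Rightarrow> 's set \<Rightarrow> nat" where
  "qc A P SS = card (A // (hr P SS)\<^sup>*)"

lemma sym_hr_star: "sym ((hr P SS)\<^sup>*)"
  by (rule sym_rtrancl) (auto simp: hr_def sym_def)

lemma hr_insert: "hr P (insert S SS) = hr P SS \<union> P S \<times> P S"
  by (auto simp: hr_def)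

lemma closure_insert:
  fixes P :: "'s \<Rightarrow> 'b set" and S :: 's and SS :: "'s set"
  defines "R \<equiv> (hr P SS)\<^sup>*" and "N \<equiv> P S"
  defines "M \<equiv> \<Union>y\<in>N. R``{y}"
  shows "(hr P (insert S SS))\<^sup>*``{x} = (if R``{x} \<inter> N = {} then R``{x} else M)"
proof -
  have symR: "sym R" unfolding R_def by (rule sym_hr_star)
  have R'eq: "hr P (insert S SS) = hr P SS \<union> N \<times> N" by (simp add: hr_insert N_def)
  let ?C = "if R``{x} \<inter> N = {} then R``{x} else M"
  have sub: "(hr P (insert S SS))\<^sup>* \<subseteq> R'" if "R' = (hr P (insert S SS))\<^sup>*" for R' using that by simp
  show ?thesis
  proof
    show "(hr P (insert S SS))\<^sup>*``{x} \<subseteq> ?C"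
    proof
      fix z assume "z \<in> (hr P (insert S SS))\<^sup>*``{x}"
      then have "(x,z) \<in> (hr P (insert S SS))\<^sup>*" by simp
      then show "z \<in> ?C"
      proof (induction rule: rtrancl_induct)
        case base
        show ?case
        proof (cases "R``{x} \<inter> N = {}")
          case True then show ?thesis by (simp add: R_def)
        next
          case False
          then obtain y where y: "y \<in> N" "(x,y) \<in> R" by auto
          then have "(y,x) \<in> R" using symR by (auto simp: sym_def)
          then show ?thesis using y False by (auto simp: M_def)
        qed
      next
        case (step z w)
        from step.hyps(2) R'eq have zw: "(z,w) \<in> hr P SS \<or> (z \<in> N \<and> w \<in> N)" by auto
        show ?case
        proof (cases "R``{x} \<inter> N = {}")
          case True
          then have zin: "(x,z) \<in> R" using step.IH by simp
          show ?thesis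
          proof (cases "(z,w) \<in> hr P SS")
            case True
            then have "(x,w) \<in> R" using zin unfolding R_def by (meson rtrancl.rtrancl_into_rtrancl)
            then show ?thesis using \<open>R``{x} \<inter> N = {}\<close> by simp
          next
            case False
            then have "z \<in> N" using zw by auto
            then show ?thesis using zin True by auto
          qed
        next
          case False
          then have "z \<in> M" using step.IH by simp
          then obtain y where y: "y \<in> N" "(y,z) \<in> R" by (auto simp: M_def)
          show ?thesis
          proof (cases "(z,w) \<in> hr P SS")
            case True
            then have "(y,w) \<in> R" using y unfolding R_def by (meson rtrancl.rtrancl_into_rtrancl)
            then show ?thesis using y False by (auto simp: M_def)
          next
            case False
            then have "w \<in> N" using zw by auto
            then show ?thesis using \<open>\<not> R``{x} \<inter> N = {}\<close> by (auto simp: M_def R_def)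
          qed
        qed
      qed
    qed
  next
    have mono: "R \<subseteq> (hr P (insert S SS))\<^sup>*"
      unfolding R_def by (rule rtrancl_mono) (auto simp: hr_def)
    show "?C \<subseteq> (hr P (insert S SS))\<^sup>*``{x}"
    proof (cases "R``{x} \<inter> N = {}")
      case True then show ?thesis using mono by auto
    next
      case False
      then obtain y0 where y0: "y0 \<in> N" "(x,y0) \<in> R" by auto
      show ?thesis
      proof
        fix w assume "w \<in> ?C"
        with False obtain y where y: "y \<in> N" "(y,w) \<in> R" by (auto simp: M_def)
        have "(y0,y) \<in> hr P (insert S SS)" using y y0 R'eq by auto
        then have "(x,w) \<in> (hr P (insert S SS))\<^sup>*"
          using mono y0 y by (meson in_mono rtrancl.rtrancl_into_rtrancl rtrancl_trans)
        then show "w \<in> (hr P (insert S SS))\<^sup>*``{x}" by simp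
      qed
    qed
  qed
qed

lemma qc_insert:
  fixes P :: "'s \<Rightarrow> 'b set"
  assumes fin: "finite A" and PA: "P S \<subseteq> A"
  shows "qc A P (insert S SS) + card {K \<in> A // (hr P SS)\<^sup>*. K \<inter> P S \<noteq> {}}
         = qc A P SS + (if P S = {} then 0 else 1)"
proof -
  define R where "R = (hr P SS)\<^sup>*"
  define N where "N = P S"
  define M where "M = (\<Union>y\<in>N. R``{y})"
  have symR: "sym R" unfolding R_def by (rule sym_hr_star)
  have cl: "(hr P (insert S SS))\<^sup>*``{x} = (if R``{x} \<inter> N = {} then R``{x} else M)" for x
    unfolding R_def N_def M_def by (rule closure_insert)
  define Kd where "Kd = {K \<in> A // R. K \<inter> N = {}}"
  define Km where "Km = {K \<in> A // R. K \<inter> N \<noteq> {}}"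
  have finQ: "finite (A // R)" unfolding quotient_def using fin by auto
  have dis: "Kd \<inter> Km = {}" "Kd \<union> Km = A // R" by (auto simp: Kd_def Km_def)
  have cardQ: "card (A // R) = card Kd + card Km"
    using finQ dis by (metis card_Un_disjoint finite_Un)
  show ?thesis
  proof (cases "N = {}")
    case True
    then have "hr P (insert S SS) = hr P SS" by (auto simp: hr_def N_def)
    then show ?thesis using True by (simp add: qc_def N_def)
  next
    case False
    then obtain y0 where y0: "y0 \<in> N" by auto
    have "y0 \<in> R``{y0}" by (simp add: R_def)
    then have y0M: "y0 \<in> M" using y0 by (auto simp: M_def)
    have Q': "A // (hr P (insert S SS))\<^sup>* = insert M Kd"
    proof
      show "A // (hr P (insert S SS))\<^sup>* \<subseteq> insert M Kd"
      proof
        fix K assume "K \<in> A // (hr P (insert S SS))\<^sup>*"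
        then obtain x where x: "x \<in> A" "K = (hr P (insert S SS))\<^sup>*``{x}"
          unfolding quotient_def by auto
        show "K \<in> insert M Kd"
        proof (cases "R``{x} \<inter> N = {}")
          case True
          then have "K = R``{x}" using x cl by simp
          then show ?thesis using True x(1) by (auto simp: Kd_def quotient_def)
        next
          case False
          then show ?thesis using x cl by simp
        qed
      qed
    next
      have "M \<in> A // (hr P (insert S SS))\<^sup>*"
      proof -
        have "R``{y0} \<inter> N \<noteq> {}" using y0 \<open>y0 \<in> R``{y0}\<close> by auto
        then have "M = (hr P (insert S SS))\<^sup>*``{y0}" using cl by simp
        moreover have "y0 \<in> A" using y0 PA N_def by auto
        ultimately show ?thesis unfolding quotient_def by auto
      qed
      moreover have "Kd \<subseteq> A // (hr P (insert S SS))\<^sup>*"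
        unfolding quotient_def Kd_def using cl by auto
      ultimately show "insert M Kd \<subseteq> A // (hr P (insert S SS))\<^sup>*" by auto
    qed
    have "M \<notin> Kd" using y0M y0 by (auto simp: Kd_def)
    moreover have "finite Kd" using finQ by (auto simp: Kd_def)
    ultimately have "qc A P (insert S SS) = card Kd + 1"
      unfolding qc_def Q' by simp
    then show ?thesis using cardQ False
      by (simp add: qc_def R_def[symmetric] Km_def N_def[symmetric])
  qed
qed

lemma km_mono:
  fixes P :: "'s \<Rightarrow> 'b set"
  assumes fin: "finite A" and sub: "SS \<subseteq> TT" and NA: "N \<subseteq> A"
  shows "card {K \<in> A // (hr P TT)\<^sup>*. K \<inter> N \<noteq> {}} \<le> card {K \<in> A // (hr P SS)\<^sup>*. K \<inter> N \<noteq> {}}"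
proof -
  define R where "R = (hr P SS)\<^sup>*"
  define T where "T = (hr P TT)\<^sup>*"
  have symT: "sym T" unfolding T_def by (rule sym_hr_star)
  have transT: "trans T" unfolding T_def by (rule trans_rtrancl)
  have RT: "R \<subseteq> T" unfolding R_def T_def by (rule rtrancl_mono) (use sub in \<open>auto simp: hr_def\<close>)
  have finQ: "finite (A // R)" unfolding quotient_def using fin by auto
  have "{K \<in> A // T. K \<inter> N \<noteq> {}} \<subseteq> (\<lambda>K. T``K) ` {K \<in> A // R. K \<inter> N \<noteq> {}}"
  proof
    fix K' assume "K' \<in> {K \<in> A // T. K \<inter> N \<noteq> {}}"
    then obtain x y where x: "x \<in> A" "K' = T``{x}" and y: "y \<in> N" "(x,y) \<in> T"
      unfolding quotient_def by auto
    have yA: "y \<in> A" using y NA by auto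
    have "T``(R``{y}) = T``{y}"
    proof
      show "T``(R``{y}) \<subseteq> T``{y}" using RT transT by (auto dest: transD)
      have "y \<in> R``{y}" by (simp add: R_def)
      then show "T``{y} \<subseteq> T``(R``{y})" by auto
    qed
    also have "T``{y} = T``{x}"
      using y(2) symT transT by (auto dest: symD transD)
    finally have "K' = T``(R``{y})" using x by simp
    moreover have "R``{y} \<in> {K \<in> A // R. K \<inter> N \<noteq> {}}"
      using yA y(1) by (auto simp: quotient_def R_def)
    ultimately show "K' \<in> (\<lambda>K. T``K) ` {K \<in> A // R. K \<inter> N \<noteq> {}}" by blast
  qed
  then have "card {K \<in> A // T. K \<inter> N \<noteq> {}} \<le> card ((\<lambda>K. T``K) ` {K \<in> A // R. K \<inter> N \<noteq> {}})"
    by (rule card_mono[rotated]) (use finQ in auto)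
  also have "\<dots> \<le> card {K \<in> A // R. K \<inter> N \<noteq> {}}" by (rule card_image_le) (use finQ in auto)
  finally show ?thesis by (simp add: R_def T_def)
qed

lemma qc_marg:
  fixes P :: "'s \<Rightarrow> 'b set"
  assumes fin: "finite A" and PA: "\<And>S. P S \<subseteq> A" and sub: "W \<subseteq> Y"
  shows "int (qc A P Y) - int (qc A P (insert S Y)) \<le> int (qc A P W) - int (qc A P (insert S W))"
  using qc_insert[where P=P and S=S and SS=W, OF fin PA] qc_insert[where P=P and S=S and SS=Y, OF fin PA]
    km_mono[where P=P and N="P S", OF fin sub PA]
  by linarith

lemma qc_diff:
  fixes P :: "'s \<Rightarrow> 'b set"
  assumes fin: "finite A" and PA: "\<And>S. P S \<subseteq> A" and finU: "finite U"
  shows "W \<subseteq> Y \<Longrightarrow> int (qc A P Y) - int (qc A P (Y \<union> U)) \<le> int (qc A P W) - int (qc A P (W \<union> U))"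
  using finU
proof (induction U arbitrary: W Y rule: finite_induct)
  case empty then show ?case by simp
next
  case (insert S U)
  have 1: "int (qc A P Y) - int (qc A P (Y \<union> U)) \<le> int (qc A P W) - int (qc A P (W \<union> U))"
    using insert by blast
  have 2: "int (qc A P (Y \<union> U)) - int (qc A P (insert S (Y \<union> U))) \<le> int (qc A P (W \<union> U)) - int (qc A P (insert S (W \<union> U)))"
    by (rule qc_marg[OF fin PA]) (use insert in auto)
  show ?case using 1 2 by simp
qed

lemma qc_supermod:
  fixes P :: "'s \<Rightarrow> 'b set"
  assumes fin: "finite A" and PA: "\<And>S. P S \<subseteq> A" and finT: "finite TT"
  shows "qc A P SS + qc A P TT \<le> qc A P (SS \<union> TT) + qc A P (SS \<inter> TT)"
proof -
  have "int (qc A P SS) - int (qc A P (SS \<union> (TT - SS))) \<le> int (qc A P (SS \<inter> TT)) - int (qc A P ((SS \<inter> TT) \<union> (TT - SS)))"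
    by (rule qc_diff[OF fin PA]) (use finT in auto)
  moreover have "SS \<union> (TT - SS) = SS \<union> TT" "(SS \<inter> TT) \<union> (TT - SS) = TT" by auto
  ultimately show ?thesis by simp
qed



lemma merge_rel_hr: "merge_rel A SS = hr (\<lambda>S. {X \<in> A. S \<inter> X \<noteq> {}}) SS"
  by (auto simp: merge_rel_def hr_def)

lemma star_in_A:
  assumes "X \<in> A" "(X, Y) \<in> (hr (\<lambda>S. {X \<in> A. S \<inter> X \<noteq> {}}) SS)\<^sup>*"
  shows "Y \<in> A"
  using assms(2,1) by (induction rule: rtrancl_induct) (auto simp: hr_def)

lemma card_merge_by:
  assumes ne: "\<forall>X\<in>A. X \<noteq> {}" and dj: "\<forall>X\<in>A. \<forall>Y\<in>A. X \<inter> Y \<noteq> {} \<longrightarrow> X = Y"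
  shows "card (merge_by A SS) = qc A (\<lambda>S. {X \<in> A. S \<inter> X \<noteq> {}}) SS"
proof -
  let ?P = "\<lambda>S. {X \<in> A. S \<inter> X \<noteq> {}}"
  let ?Q = "(hr ?P SS)\<^sup>*"
  have symQ: "sym ?Q" by (rule sym_hr_star)
  have trQ: "trans ?Q" by (rule trans_rtrancl)
  have "inj_on Union (A // ?Q)"
  proof (rule inj_onI)
    fix K1 K2 assume K1: "K1 \<in> A // ?Q" and K2: "K2 \<in> A // ?Q" and eq: "\<Union>K1 = \<Union>K2"
    obtain X1 where X1: "X1 \<in> A" "K1 = ?Q``{X1}" using K1 unfolding quotient_def by auto
    obtain X2 where X2: "X2 \<in> A" "K2 = ?Q``{X2}" using K2 unfolding quotient_def by auto
    obtain v where v: "v \<in> X1" using ne X1 by auto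
    have "X1 \<in> K1" using X1 by auto
    then have "v \<in> \<Union>K2" using v eq by auto
    then obtain Y where Y: "Y \<in> K2" "v \<in> Y" by auto
    have "(X2, Y) \<in> ?Q" using Y X2 by auto
    then have YA: "Y \<in> A" using X2(1) by (rule star_in_A[rotated])
    have "Y \<inter> X1 \<noteq> {}" using Y(2) v by auto
    then have "Y = X1" using dj YA X1(1) by auto
    then have "(X2, X1) \<in> ?Q" using Y X2 by auto
    then show "K1 = K2" using X1 X2 symQ trQ by (auto dest: symD transD)
  qed
  then show ?thesis
    unfolding merge_by_def qc_def merge_rel_hr by (simp add: card_image)
qed

lemma pointwise_submod:
  assumes fin: "finite A" and ne: "\<forall>X\<in>A. X \<noteq> {}"
    and dj: "\<forall>X\<in>A. \<forall>Y\<in>A. X \<inter> Y \<noteq> {} \<longrightarrow> X = Y" and finT: "finite TT"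
  shows "(real (card A) - real (card (merge_by A (SS \<union> TT))))
       + (real (card A) - real (card (merge_by A (SS \<inter> TT))))
       \<le> (real (card A) - real (card (merge_by A SS)))
       + (real (card A) - real (card (merge_by A TT)))"
proof -
  have "qc A (\<lambda>S. {X \<in> A. S \<inter> X \<noteq> {}}) SS + qc A (\<lambda>S. {X \<in> A. S \<inter> X \<noteq> {}}) TT
     \<le> qc A (\<lambda>S. {X \<in> A. S \<inter> X \<noteq> {}}) (SS \<union> TT) + qc A (\<lambda>S. {X \<in> A. S \<inter> X \<noteq> {}}) (SS \<inter> TT)"
    by (rule qc_supermod[OF fin _ finT]) auto
  then have "card (merge_by A SS) + card (merge_by A TT) \<le> card (merge_by A (SS \<union> TT)) + card (merge_by A (SS \<inter> TT))"
    by (simp add: card_merge_by[OF ne dj])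
  then show ?thesis by linarith
qed

lemma merge_by_le: "card (merge_by A SS) \<le> card A" if "finite A"
proof -
  have "card (merge_by A SS) \<le> card (A // (merge_rel A SS)\<^sup>*)"
    unfolding merge_by_def by (rule card_image_le) (use that in \<open>auto simp: quotient_def\<close>)
  also have "\<dots> \<le> card A"
  proof -
    have "A // (merge_rel A SS)\<^sup>* = (\<lambda>x. (merge_rel A SS)\<^sup>* `` {x}) ` A" unfolding quotient_def by auto
    then show ?thesis using card_image_le[OF that] by metis
  qed
  finally show ?thesis .
qed

lemma merge_by_Id:
  assumes "merge_rel A SS \<subseteq> Id"
  shows "merge_by A SS = A"
proof -
  have st: "(merge_rel A SS)\<^sup>* = Id"
  proof
    show "(merge_rel A SS)\<^sup>* \<subseteq> Id"
    proof
      fix p assume "p \<in> (merge_rel A SS)\<^sup>*"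
      then obtain x y where p: "p = (x,y)" "(x,y) \<in> (merge_rel A SS)\<^sup>*" by (cases p) auto
      from p(2) have "x = y" by (induction rule: rtrancl_induct) (use assms in auto)
      then show "p \<in> Id" using p by simp
    qed
  qed auto
  show ?thesis unfolding merge_by_def st quotient_def by auto
qed

section \<open>components\<close>

lemma sym_edge_star: "sym ((edge_rel F)\<^sup>*)"
  by (rule sym_rtrancl) (auto simp: edge_rel_def sym_def insert_commute)

lemma comp_of_eq:
  assumes "u \<in> comp_of V F w"
  shows "comp_of V F w = comp_of V F u"
proof -
  have "(w,u) \<in> (edge_rel F)\<^sup>*" using assms by (simp add: comp_of_def)
  moreover have "(u,w) \<in> (edge_rel F)\<^sup>*" using calculation sym_edge_star[of F] by (auto dest: symD)
  ultimately show ?thesis unfolding comp_of_def by (auto intro: rtrancl_trans)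
qed

lemma components_props:
  assumes "finite V"
  shows "finite (components V F)" "\<forall>X\<in>components V F. X \<noteq> {}"
    "\<forall>X\<in>components V F. \<forall>Y\<in>components V F. X \<inter> Y \<noteq> {} \<longrightarrow> X = Y"
    "components V F \<subseteq> Pow V"
proof -
  show "finite (components V F)" using assms by (simp add: components_def)
  show "\<forall>X\<in>components V F. X \<noteq> {}" by (auto simp: components_def comp_of_def)
  show "\<forall>X\<in>components V F. \<forall>Y\<in>components V F. X \<inter> Y \<noteq> {} \<longrightarrow> X = Y"
  proof (intro ballI impI)
    fix X Y assume "X \<in> components V F" "Y \<in> components V F" "X \<inter> Y \<noteq> {}"
    then obtain x y u where "X = comp_of V F x" "Y = comp_of V F y" "u \<in> X" "u \<in> Y"
      unfolding components_def by auto
    then show "X = Y" using comp_of_eq by metis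
  qed
  show "components V F \<subseteq> Pow V" by (auto simp: components_def comp_of_def)
qed

lemma active_sub: "active_sets V D F b t \<subseteq> components V (F t)"
  by (auto simp: active_sets_def)



lemma Fset_meas:
  assumes finV: "finite V" and Eok: "\<forall>e\<in>E. e \<subseteq> V \<and> card e = 2"
    and mr: "moat_run V E c D \<epsilon> F b"
  shows "{t\<in>{0..}. Q (F t)} \<in> sets borel"
proof -
  have mono: "\<And>s t. 0 \<le> s \<Longrightarrow> s \<le> t \<Longrightarrow> F s \<subseteq> F t" using mr unfolding moat_run_def by blast
  have FE: "\<And>t. 0 \<le> t \<Longrightarrow> F t \<subseteq> E"
  proof -
    fix t :: real assume "0 \<le> t"
    then have "F t = {e \<in> E. c e \<le> (\<Sum>S\<in>Pow V. if e \<in> cut_edges E S then dual_y V D F b S t else 0)}"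
      using mr by (simp add: moat_run_def)
    then show "F t \<subseteq> E" by auto
  qed
  have finE: "finite E" using Eok finV by (meson PowI finite_Pow_iff finite_subset subsetI)
  have eq: "{t\<in>{0..}. Q (F t)} = (\<Union>G\<in>{G\<in>Pow E. Q G}. {t\<in>{0..}. F t = G})"
    using FE by auto
  have "(\<Union>G\<in>{G\<in>Pow E. Q G}. {t\<in>{0..}. F t = G}) \<in> sets borel"
  proof (rule sets.finite_UN)
    show "finite {G\<in>Pow E. Q G}" using finE by auto
    fix G assume "G \<in> {G\<in>Pow E. Q G}"
    have "is_interval {t\<in>{0..}. F t = G}"
      unfolding is_interval_1
    proof (intro ballI allI impI)
      fix a bb x assume a: "a \<in> {t\<in>{0..}. F t = G}" and bb: "bb \<in> {t\<in>{0..}. F t = G}" and x: "a \<le> x \<and> x \<le> bb"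
      have "F a \<subseteq> F x" using mono a x by auto
      moreover have "F x \<subseteq> F bb" using mono a x by auto
      ultimately show "x \<in> {t\<in>{0..}. F t = G}" using a bb x by auto
    qed
    then show "{t\<in>{0..}. F t = G} \<in> sets borel" by (rule real_interval_borel_measurable)
  qed
  then show ?thesis using eq by simp
qed

lemma active_meas:
  assumes finV: "finite V" and Eok: "\<forall>e\<in>E. e \<subseteq> V \<and> card e = 2"
    and mr: "moat_run V E c D \<epsilon> F b"
  shows "{t\<in>{0..}. S \<in> active_sets V D F b t} \<in> sets borel"
proof -
  define g where "g = (\<lambda>s. \<epsilon> * real (card {S' \<in> components V (F s). S' \<subseteq> S \<and> demand_active V D (F s) S'})
          - real (card {S' \<in> components V (F s). S' \<subseteq> S \<and> \<not> demand_active V D (F s) S' \<and> b s S' > 0}))"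
  define G where "G = (\<lambda>t. LBINT s:{0..t}. g s)"
  have bG: "b t S = G t" if "0 \<le> t" "S \<in> components V (F t)" for t
    using mr that unfolding moat_run_def G_def g_def by blast
  have Gm: "G \<in> borel_measurable borel" unfolding G_def by (rule meas_upto)
  have Gpos: "{t. 0 < G t} \<in> sets borel"
    using borel_measurable_iff_greater[THEN iffD1, OF Gm, rule_format, of 0] by simp
  have eq: "{t\<in>{0..}. S \<in> active_sets V D F b t} =
     {t\<in>{0..}. S \<in> components V (F t) \<and> demand_active V D (F t) S} \<union>
     ({t\<in>{0..}. S \<in> components V (F t) \<and> \<not> demand_active V D (F t) S} \<inter> {t. 0 < G t})"
    using bG by (auto simp: active_sets_def)
  show ?thesis unfolding eq
    by (intro sets.Un sets.Int Gpos Fset_meas[OF finV Eok mr])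
qed

lemma level_meas:
  assumes finV: "finite V" and Eok: "\<forall>e\<in>E. e \<subseteq> V \<and> card e = 2"
    and mr: "moat_run V E c D \<epsilon> F b" and r: "r \<subseteq> Pow V"
  shows "{t\<in>{0..}. active_sets V D F b t = r} \<in> sets borel"
proof -
  define M where "M = (\<lambda>S. {t\<in>{0..}. S \<in> active_sets V D F b t})"
  have AV: "active_sets V D F b t \<subseteq> Pow V" for t
    using active_sub components_props(4)[OF finV] by blast
  have eq: "{t\<in>{0..}. active_sets V D F b t = r} = (\<Inter>S\<in>Pow V. if S \<in> r then M S else {0..} - M S)"
  proof
    show "{t\<in>{0..}. active_sets V D F b t = r} \<subseteq> (\<Inter>S\<in>Pow V. if S \<in> r then M S else {0..} - M S)"
      by (auto simp: M_def)
    show "(\<Inter>S\<in>Pow V. if S \<in> r then M S else {0..} - M S) \<subseteq> {t\<in>{0..}. active_sets V D F b t = r}"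
    proof
      fix t assume t: "t \<in> (\<Inter>S\<in>Pow V. if S \<in> r then M S else {0..} - M S)"
      have "t \<in> (if {} \<in> r then M {} else {0..} - M {})" using INT_D[OF t, of "{}"] by simp
      then have t0: "t \<in> {0..}" by (auto simp: M_def split: if_splits)
      have "active_sets V D F b t = r"
      proof
        show "active_sets V D F b t \<subseteq> r"
        proof
          fix S assume S: "S \<in> active_sets V D F b t"
          then have "S \<in> Pow V" using AV by auto
          then have "t \<in> (if S \<in> r then M S else {0..} - M S)" using INT_D[OF t] by blast
          then show "S \<in> r" using S by (auto simp: M_def split: if_splits)
        qed
        show "r \<subseteq> active_sets V D F b t"
        proof
          fix S assume S: "S \<in> r"
          then have "S \<in> Pow V" using r by auto
          then have "t \<in> (if S \<in> r then M S else {0..} - M S)" using INT_D[OF t] by blast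
          then show "S \<in> active_sets V D F b t" using S by (auto simp: M_def split: if_splits)
        qed
      qed
      then show "t \<in> {t\<in>{0..}. active_sets V D F b t = r}" using t0 by simp
    qed
  qed
  have "(\<Inter>S\<in>Pow V. if S \<in> r then M S else {0..} - M S) \<in> sets borel"
  proof (rule sets.finite_INT)
    show "finite (Pow V)" using finV by simp
    show "Pow V \<noteq> {}" by auto
    fix S assume "S \<in> Pow V"
    have "M S \<in> sets borel" unfolding M_def by (rule active_meas[OF finV Eok mr])
    then show "(if S \<in> r then M S else {0..} - M S) \<in> sets borel" by auto
  qed
  then show ?thesis using eq by simp
qed

lemma integrand_meas:
  assumes finV: "finite V" and Eok: "\<forall>e\<in>E. e \<subseteq> V \<and> card e = 2"
    and mr: "moat_run V E c D \<epsilon> F b"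
  fixes \<phi> :: "'v set set \<Rightarrow> real"
  shows "(\<lambda>t. indicator {0..} t * \<phi> (active_sets V D F b t)) \<in> borel_measurable borel"
proof -
  have AV: "active_sets V D F b t \<in> Pow (Pow V)" for t
    using active_sub components_props(4)[OF finV] by blast
  have eq: "(\<lambda>t. indicator {0..} t * \<phi> (active_sets V D F b t)) =
     (\<lambda>t. \<Sum>r\<in>Pow (Pow V). \<phi> r * indicator {t\<in>{0..}. active_sets V D F b t = r} t)"
  proof
    fix t :: real
    have "(\<Sum>r\<in>Pow (Pow V). \<phi> r * indicator {t\<in>{0..}. active_sets V D F b t = r} t)
        = (\<Sum>r\<in>Pow (Pow V). if r = active_sets V D F b t then \<phi> r * indicator {0..} t else 0)"
      by (rule sum.cong) (auto simp: indicator_def)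
    also have "\<dots> = \<phi> (active_sets V D F b t) * indicator {0..} t"
      using AV[of t] finV by (simp add: sum.delta')
    finally show "indicator {0..} t * \<phi> (active_sets V D F b t) =
       (\<Sum>r\<in>Pow (Pow V). \<phi> r * indicator {t\<in>{0..}. active_sets V D F b t = r} t)" by simp
  qed
  show ?thesis unfolding eq
    apply (intro borel_measurable_sum borel_measurable_times borel_measurable_const borel_measurable_indicator)
    apply (rule level_meas[OF finV Eok mr])
    apply simp
    done
qed



lemma eventually_nomerge:
  assumes finV: "finite V" and mr: "moat_run V E c D \<epsilon> F b"
    and XX: "XX \<subseteq> {S. actively_connected_set V D F b S}"
  shows "\<exists>T0\<ge>0. \<forall>t\<ge>T0. merge_by (active_sets V D F b t) XX = active_sets V D F b t"
proof -
  have mono: "\<And>s t. 0 \<le> s \<Longrightarrow> s \<le> t \<Longrightarrow> F s \<subseteq> F t" using mr unfolding moat_run_def by blast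
  define Pairs where "Pairs = {p \<in> V \<times> V. actively_connected V D F b (fst p) (snd p)}"
  define \<tau> where "\<tau> = (\<lambda>p. SOME t. t \<ge> 0 \<and> (\<exists>C\<in>components V (F t). fst p \<in> C \<and> snd p \<in> C))"
  have \<tau>: "\<tau> p \<ge> 0 \<and> (\<exists>C\<in>components V (F (\<tau> p)). fst p \<in> C \<and> snd p \<in> C)" if "p \<in> Pairs" for p
  proof -
    have "\<exists>t. t \<ge> 0 \<and> (\<exists>C\<in>components V (F t). fst p \<in> C \<and> snd p \<in> C)"
      using that by (auto simp: Pairs_def actively_connected_def)
    then show ?thesis unfolding \<tau>_def by (rule someI_ex)
  qed
  have finP: "finite Pairs" using finV by (auto simp: Pairs_def)
  define T0 where "T0 = Max (insert 0 (\<tau> ` Pairs))"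
  have T0: "0 \<le> T0" "\<And>p. p \<in> Pairs \<Longrightarrow> \<tau> p \<le> T0"
    unfolding T0_def by (rule Max_ge; use finP in simp)+
  have key: "comp_of V (F t) u = comp_of V (F t) v" if tT: "t \<ge> T0" and uvP: "(u,v) \<in> Pairs" for t u v
  proof -
    obtain C where C: "C \<in> components V (F (\<tau> (u,v)))" "u \<in> C" "v \<in> C" using \<tau>[OF uvP] by auto
    obtain w where w: "C = comp_of V (F (\<tau> (u,v))) w" using C(1) by (auto simp: components_def)
    have sub: "F (\<tau> (u,v)) \<subseteq> F t" using mono \<tau>[OF uvP] T0(2)[OF uvP] tT by auto
    have "(edge_rel (F (\<tau> (u,v))))\<^sup>* \<subseteq> (edge_rel (F t))\<^sup>*"
      by (rule rtrancl_mono) (use sub in \<open>auto simp: edge_rel_def\<close>)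
    then have "u \<in> comp_of V (F t) w" "v \<in> comp_of V (F t) w" using C w by (auto simp: comp_of_def)
    then show ?thesis using comp_of_eq[of u V "F t" w] comp_of_eq[of v V "F t" w] by simp
  qed
  have "\<forall>t\<ge>T0. merge_by (active_sets V D F b t) XX = active_sets V D F b t"
  proof (intro allI impI)
    fix t assume t: "T0 \<le> t"
    show "merge_by (active_sets V D F b t) XX = active_sets V D F b t"
    proof (rule merge_by_Id, rule subsetI)
      fix p assume "p \<in> merge_rel (active_sets V D F b t) XX"
      then obtain X Y S where p: "p = (X,Y)" and XY: "X \<in> active_sets V D F b t" "Y \<in> active_sets V D F b t"
        and S: "S \<in> XX" "S \<inter> X \<noteq> {}" "S \<inter> Y \<noteq> {}"
        by (auto simp: merge_rel_def)
      obtain u v where u: "u \<in> S" "u \<in> X" and v: "v \<in> S" "v \<in> Y" using S by auto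
      have acs: "actively_connected_set V D F b S" using XX S(1) by auto
      then have uv: "(u,v) \<in> Pairs" using u v by (auto simp: actively_connected_set_def Pairs_def)
      obtain x where x: "X = comp_of V (F t) x" using XY(1) active_sub[of V D F b t] by (auto simp: components_def)
      obtain y where y: "Y = comp_of V (F t) y" using XY(2) active_sub[of V D F b t] by (auto simp: components_def)
      have "X = comp_of V (F t) u" using x u comp_of_eq[of u V "F t" x] by simp
      moreover have "Y = comp_of V (F t) v" using y v comp_of_eq[of v V "F t" y] by simp
      ultimately have "X = Y" using key[OF t uv] by simp
      then show "p \<in> Id" using p by simp
    qed
  qed
  then show ?thesis using T0(1) by blast
qed



lemma integrable_f:
  assumes finV: "finite V" and Eok: "\<forall>e\<in>E. e \<subseteq> V \<and> card e = 2"
    and mr: "moat_run V E c D \<epsilon> F b"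
    and XX: "XX \<subseteq> {S. actively_connected_set V D F b S}"
  shows "set_integrable lborel {0..} (\<lambda>t. real (card (active_sets V D F b t)) - real (card (merge_by (active_sets V D F b t) XX)))"
proof -
  obtain T0 where T0: "T0 \<ge> 0" "\<And>t. t \<ge> T0 \<Longrightarrow> merge_by (active_sets V D F b t) XX = active_sets V D F b t"
    using eventually_nomerge[OF finV mr XX] by blast
  define \<phi> where "\<phi> = (\<lambda>r. real (card r) - real (card (merge_by r XX)))"
  have finA: "finite (active_sets V D F b t)" for t
    by (rule finite_subset[OF active_sub components_props(1)[OF finV]])
  have cardA: "card (active_sets V D F b t) \<le> card (Pow V)" for t
    by (rule card_mono[OF _ subset_trans[OF active_sub components_props(4)[OF finV]]]) (use finV in simp)
  show ?thesis unfolding set_integrable_def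
  proof (rule integrableI_bounded_set[where A="{0..T0}" and B="real (card (Pow V))"])
    show "{0..T0} \<in> sets lborel" by simp
    show "(\<lambda>x. indicator {0..} x *\<^sub>R (real (card (active_sets V D F b x)) - real (card (merge_by (active_sets V D F b x) XX)))) \<in> borel_measurable lborel"
      using integrand_meas[OF finV Eok mr, of \<phi>] by (simp add: \<phi>_def)
    show "emeasure lborel {0..T0} < \<infinity>" by (simp add: emeasure_lborel_Icc_eq)
    show "AE x in lborel. x \<in> {0..T0} \<longrightarrow> norm (indicator {0..} x *\<^sub>R (real (card (active_sets V D F b x)) - real (card (merge_by (active_sets V D F b x) XX)))) \<le> real (card (Pow V))"
    proof (rule AE_I2, rule impI)
      fix x :: real
      have "card (merge_by (active_sets V D F b x) XX) \<le> card (active_sets V D F b x)"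
        by (rule merge_by_le[OF finA])
      then show "norm (indicator {0..} x *\<^sub>R (real (card (active_sets V D F b x)) - real (card (merge_by (active_sets V D F b x) XX)))) \<le> real (card (Pow V))"
        using cardA[of x] by (auto simp: indicator_def)
    qed
    show "AE x in lborel. x \<notin> {0..T0} \<longrightarrow> indicator {0..} x *\<^sub>R (real (card (active_sets V D F b x)) - real (card (merge_by (active_sets V D F b x) XX))) = 0"
    proof (rule AE_I2, rule impI)
      fix x :: real assume "x \<notin> {0..T0}"
      then have "x < 0 \<or> x \<ge> T0" by auto
      then show "indicator {0..} x *\<^sub>R (real (card (active_sets V D F b x)) - real (card (merge_by (active_sets V D F b x) XX))) = 0"
        using T0(2) by (auto simp: indicator_def)
    qed
  qed
qed



theorem lemma3p5:
  fixes V :: "'v set" and E :: "'v set set" and c :: "'v set \<Rightarrow> real"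
    and D :: "'v set set" and \<epsilon> :: real
    and F :: "real \<Rightarrow> 'v set set" and b :: "real \<Rightarrow> 'v set \<Rightarrow> real"
  assumes "finite V"
    and "\<forall>e\<in>E. e \<subseteq> V \<and> card e = 2"
    and "\<forall>e\<in>E. c e \<ge> 0"
    and "\<forall>d\<in>D. d \<subseteq> V \<and> card d = 2"
    and "\<epsilon> \<ge> 0"
    and "moat_run V E c D \<epsilon> F b"
  shows "\<forall>SS TT. SS \<subseteq> {S. actively_connected_set V D F b S} \<longrightarrow>
                TT \<subseteq> {S. actively_connected_set V D F b S} \<longrightarrow>
           gain V D F b (SS \<union> TT) + gain V D F b (SS \<inter> TT) \<le> gain V D F b SS + gain V D F b TT"
proof (intro allI impI)
  fix SS TT assume SS: "SS \<subseteq> {S. actively_connected_set V D F b S}"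
    and TT: "TT \<subseteq> {S. actively_connected_set V D F b S}"
  note finV = assms(1) and Eok = assms(2) and mr = assms(6)
  define f where "f = (\<lambda>XX t. real (card (active_sets V D F b t)) - real (card (merge_by (active_sets V D F b t) XX)))"
  have int: "set_integrable lborel {0..} (f XX)" if "XX \<subseteq> {S. actively_connected_set V D F b S}" for XX
    unfolding f_def by (rule integrable_f[OF finV Eok mr that])
  have iU: "set_integrable lborel {0..} (f (SS \<union> TT))" using SS TT by (intro int) auto
  have iI: "set_integrable lborel {0..} (f (SS \<inter> TT))" using SS TT by (intro int) auto
  have iS: "set_integrable lborel {0..} (f SS)" using SS by (intro int) auto
  have iT: "set_integrable lborel {0..} (f TT)" using TT by (intro int) auto
  have finT: "finite TT"
  proof (rule finite_subset)
    show "TT \<subseteq> Pow V" using TT by (auto simp: actively_connected_set_def)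
  qed (use finV in simp)
  have pw: "f (SS \<union> TT) t + f (SS \<inter> TT) t \<le> f SS t + f TT t" for t
  proof -
    have finA: "finite (active_sets V D F b t)"
      by (rule finite_subset[OF active_sub components_props(1)[OF finV]])
    have ne: "\<forall>X\<in>active_sets V D F b t. X \<noteq> {}"
      using active_sub[of V D F b t] components_props(2)[OF finV, of "F t"] by blast
    have dj: "\<forall>X\<in>active_sets V D F b t. \<forall>Y\<in>active_sets V D F b t. X \<inter> Y \<noteq> {} \<longrightarrow> X = Y"
      using active_sub[of V D F b t] components_props(3)[OF finV, of "F t"] by blast
    show ?thesis unfolding f_def by (rule pointwise_submod[OF finA ne dj finT])
  qed
  have "(LBINT t:{0..}. f (SS \<union> TT) t) + (LBINT t:{0..}. f (SS \<inter> TT) t)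
      = (LBINT t:{0..}. f (SS \<union> TT) t + f (SS \<inter> TT) t)"
    using set_integral_add(2)[OF iU iI] by simp
  also have "\<dots> \<le> (LBINT t:{0..}. f SS t + f TT t)"
    by (rule set_integral_mono[OF set_integral_add(1)[OF iU iI] set_integral_add(1)[OF iS iT]]) (rule pw)
  also have "\<dots> = (LBINT t:{0..}. f SS t) + (LBINT t:{0..}. f TT t)"
    using set_integral_add(2)[OF iS iT] by simp
  finally have "(LBINT t:{0..}. f (SS \<union> TT) t) + (LBINT t:{0..}. f (SS \<inter> TT) t) \<le> (LBINT t:{0..}. f SS t) + (LBINT t:{0..}. f TT t)" .
  then show "gain V D F b (SS \<union> TT) + gain V D F b (SS \<inter> TT) \<le> gain V D F b SS + gain V D F b TT"
    unfolding gain_def f_def by linarith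
qed

end
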